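(* Let $M^{n}$ be a biharmonic hypersurface in the unit sphere $S^{n+1}\subset\mathbb{R}^{n+2}$, and let $x_i=\langle X,E_i\rangle|_{M^n}$ for $1\le i\le n+2$, where $X$ is the position vector in $\mathbb{R}^{n+2}$ and $\{E_i\}_{i=1}^{n+2}$ is the standard basis of $\mathbb{R}^{n+2}$. If there exists a function $\phi$ on $M^{n}$ such that \[ \Delta\Delta x_{i}=\phi\, x_{i}\quad\text{for }1\leq i\leq n+2, \] where $\Delta$ is the Laplacian of $M^n$, then $M^{n}$ is minimal.
   Context: For a map $\psi:M\to \bar M$ between Riemannian manifolds, the tension field is $\tau(\psi)=\mathrm{tr}\,\nabla d\psi$, and $\psi$ is biharmonic if it is a critical point of the bienergy $E_2(\psi)=\int_M|\tau(\psi)|^2$, i.e. $\tau_2(\psi)=\Delta\tau(\psi)+\mathrm{tr}\,\bar{R}iem(\tau(\psi),d\psi)d\psi=0$, where $\bar{R}iem(u,v)w=\bar\nabla_u\bar\nabla_v w-\bar\nabla_v\bar\nabla_u w-\bar\nabla_{[u,v]}w$. A hypersurface is biharmonic if its canonical inclusion is a biharmonic map. The Laplacian on functions is $\Delta f=\mathrm{tr}\,\nabla\nabla f$. *)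

theory Defs
  imports "HOL-Analysis.Analysis"
begin

text \<open>Local differential geometry of an immersed hypersurface X : U \<rightarrow> S^(n+1) \<subseteq> R^(n+2),
  U open in R^n, in the coordinates of U.  Index type 'n has n elements, 'm has n+2.\<close>

definition pd :: "'n::finite \<Rightarrow> (real^'n \<Rightarrow> 'b::real_normed_vector) \<Rightarrow> real^'n \<Rightarrow> 'b" where
  "pd i f x = frechet_derivative f (at x) (axis i 1)"

fun ipd :: "'n::finite list \<Rightarrow> (real^'n \<Rightarrow> 'b::real_normed_vector) \<Rightarrow> real^'n \<Rightarrow> 'b" where
  "ipd [] f = f"
| "ipd (i # is) f = pd i (ipd is f)"

definition smooth_on :: "(real^'n::finite) set \<Rightarrow> (real^'n \<Rightarrow> 'b::real_normed_vector) \<Rightarrow> bool" where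
  "smooth_on U f \<longleftrightarrow> (\<forall>is. \<forall>x\<in>U. ipd is f differentiable (at x))"

definition immersion_on :: "(real^'n::finite) set \<Rightarrow> (real^'n \<Rightarrow> real^'m::finite) \<Rightarrow> bool" where
  "immersion_on U X \<longleftrightarrow> (\<forall>x\<in>U. inj (frechet_derivative X (at x)))"

definition metric :: "(real^'n::finite \<Rightarrow> real^'m::finite) \<Rightarrow> real^'n \<Rightarrow> real^'n^'n" where
  "metric X x = (\<chi> i j. pd i X x \<bullet> pd j X x)"

definition ginv :: "(real^'n::finite \<Rightarrow> real^'m::finite) \<Rightarrow> real^'n \<Rightarrow> real^'n^'n" where
  "ginv X x = matrix_inv (metric X x)"

definition christ :: "(real^'n::finite \<Rightarrow> real^'m::finite) \<Rightarrow> 'n \<Rightarrow> 'n \<Rightarrow> 'n \<Rightarrow> real^'n \<Rightarrow> real" where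
  "christ X k i j x = (1/2) * (\<Sum>l\<in>UNIV. ginv X x $ k $ l *
      (pd i (\<lambda>y. metric X y $ j $ l) x + pd j (\<lambda>y. metric X y $ i $ l) x
       - pd l (\<lambda>y. metric X y $ i $ j) x))"

text \<open>Orthogonal projection onto the tangent space of the unit sphere at p; the Levi-Civita
  connection of S^(n+1) along X is the projection of the ambient derivative.\<close>
definition sph_proj :: "real^'m::finite \<Rightarrow> real^'m \<Rightarrow> real^'m" where
  "sph_proj p v = v - (v \<bullet> p) *\<^sub>R p"

definition pull_conn :: "(real^'n::finite \<Rightarrow> real^'m::finite) \<Rightarrow> 'n \<Rightarrow> (real^'n \<Rightarrow> real^'m) \<Rightarrow> real^'n \<Rightarrow> real^'m" where
  "pull_conn X i V x = sph_proj (X x) (pd i V x)"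

definition hess_map :: "(real^'n::finite \<Rightarrow> real^'m::finite) \<Rightarrow> 'n \<Rightarrow> 'n \<Rightarrow> real^'n \<Rightarrow> real^'m" where
  "hess_map X i j x = pull_conn X i (pd j X) x - (\<Sum>k\<in>UNIV. christ X k i j x *\<^sub>R pd k X x)"

definition tension :: "(real^'n::finite \<Rightarrow> real^'m::finite) \<Rightarrow> real^'n \<Rightarrow> real^'m" where
  "tension X x = (\<Sum>i\<in>UNIV. \<Sum>j\<in>UNIV. ginv X x $ i $ j *\<^sub>R hess_map X i j x)"

text \<open>Mean curvature vector field H = (1/n) trace B (for a submanifold, tension = trace B).\<close>
definition mean_curv :: "(real^'n::finite \<Rightarrow> real^'m::finite) \<Rightarrow> real^'n \<Rightarrow> real^'m" where
  "mean_curv X x = (1 / real CARD('n)) *\<^sub>R tension X x"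

definition rough_lap :: "(real^'n::finite \<Rightarrow> real^'m::finite) \<Rightarrow> (real^'n \<Rightarrow> real^'m) \<Rightarrow> real^'n \<Rightarrow> real^'m" where
  "rough_lap X V x = (\<Sum>i\<in>UNIV. \<Sum>j\<in>UNIV. ginv X x $ i $ j *\<^sub>R
      (pull_conn X i (pull_conn X j V) x - (\<Sum>k\<in>UNIV. christ X k i j x *\<^sub>R pull_conn X k V x)))"

text \<open>Curvature tensor of the unit sphere, convention R(u,v)w = nabla_u nabla_v w - nabla_v nabla_u w - nabla_[u,v] w.\<close>
definition sphere_R :: "real^'m::finite \<Rightarrow> real^'m \<Rightarrow> real^'m \<Rightarrow> real^'m" where
  "sphere_R u v w = (v \<bullet> w) *\<^sub>R u - (u \<bullet> w) *\<^sub>R v"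

definition bitension :: "(real^'n::finite \<Rightarrow> real^'m::finite) \<Rightarrow> real^'n \<Rightarrow> real^'m" where
  "bitension X x = rough_lap X (tension X) x
      + (\<Sum>i\<in>UNIV. \<Sum>j\<in>UNIV. ginv X x $ i $ j *\<^sub>R sphere_R (tension X x) (pd i X x) (pd j X x))"

definition biharmonic_on :: "(real^'n::finite) set \<Rightarrow> (real^'n \<Rightarrow> real^'m::finite) \<Rightarrow> bool" where
  "biharmonic_on U X \<longleftrightarrow> (\<forall>x\<in>U. bitension X x = 0)"

definition lap :: "(real^'n::finite \<Rightarrow> real^'m::finite) \<Rightarrow> (real^'n \<Rightarrow> real) \<Rightarrow> real^'n \<Rightarrow> real" where
  "lap X f x = (\<Sum>i\<in>UNIV. \<Sum>j\<in>UNIV. ginv X x $ i $ j *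
      (pd i (pd j f) x - (\<Sum>k\<in>UNIV. christ X k i j x * pd k f x)))"

end

theory Submission
  imports Defs
begin


lemma pd_cong:
  assumes "open U" "x \<in> U" "\<And>y. y \<in> U \<Longrightarrow> f y = g y"
  shows "pd i f x = pd i g x"
proof -
  have "(\<lambda>D. (f has_derivative D) (at x)) = (\<lambda>D. (g has_derivative D) (at x))"
    using assms by (auto intro!: ext intro: has_derivative_transform_within_open)
  then show ?thesis unfolding pd_def frechet_derivative_def by simp
qed

lemma pd_has: "(f has_derivative f') (at x) \<Longrightarrow> pd i f x = f' (axis i 1)"
  unfolding pd_def using frechet_derivative_at by metis

lemma diff_has: "f differentiable at x \<Longrightarrow> (f has_derivative frechet_derivative f (at x)) (at x)"
  using frechet_derivative_works by blast

lemma pd_bilinear: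
  fixes bop :: "'a::real_normed_vector \<Rightarrow> 'b::real_normed_vector \<Rightarrow> 'c::real_normed_vector"
    and f :: "real^'n::finite \<Rightarrow> 'a" and g :: "real^'n \<Rightarrow> 'b"
  assumes "bounded_bilinear bop" "f differentiable at x" "g differentiable at x"
  shows "pd i (\<lambda>y. bop (f y) (g y)) x = bop (f x) (pd i g x) + bop (pd i f x) (g x)"
  using bounded_bilinear.FDERIV[OF assms(1) diff_has[OF assms(2)] diff_has[OF assms(3)]]
  by (subst pd_has, assumption) (simp add: pd_def)

lemma pd_linear:
  fixes L :: "'a::real_normed_vector \<Rightarrow> 'b::real_normed_vector" and f :: "real^'n::finite \<Rightarrow> 'a"
  assumes "bounded_linear L" "f differentiable at x"
  shows "pd i (\<lambda>y. L (f y)) x = L (pd i f x)"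
  using has_derivative_compose[OF diff_has[OF assms(2)] bounded_linear.has_derivative[OF assms(1) has_derivative_ident]]
  by (subst pd_has, simp add: o_def) (simp add: pd_def)

lemma pd_add:
  fixes f g :: "real^'n::finite \<Rightarrow> 'a::real_normed_vector"
  assumes "f differentiable at x" "g differentiable at x"
  shows "pd i (\<lambda>y. f y + g y) x = pd i f x + pd i g x"
  using has_derivative_add[OF diff_has[OF assms(1)] diff_has[OF assms(2)]]
  by (subst pd_has, assumption) (simp add: pd_def)

lemma pd_diff:
  fixes f g :: "real^'n::finite \<Rightarrow> 'a::real_normed_vector"
  assumes "f differentiable at x" "g differentiable at x"
  shows "pd i (\<lambda>y. f y - g y) x = pd i f x - pd i g x"
  using has_derivative_diff[OF diff_has[OF assms(1)] diff_has[OF assms(2)]]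
  by (subst pd_has, assumption) (simp add: pd_def)

lemma pd_const: "pd (i::'n::finite) (\<lambda>y. c::'a::real_normed_vector) x = 0"
  by (simp add: pd_def)
lemma "pd i (\<lambda>y. c) x = 0"
  by (simp add: pd_def)

lemma pd_sum:
  fixes f :: "'i \<Rightarrow> real^'n::finite \<Rightarrow> 'a::real_normed_vector"
  assumes "finite A" "\<And>a. a \<in> A \<Longrightarrow> f a differentiable at x"
  shows "pd i (\<lambda>y. \<Sum>a\<in>A. f a y) x = (\<Sum>a\<in>A. pd i (f a) x)"
proof -
  have "((\<lambda>y. \<Sum>a\<in>A. f a y) has_derivative (\<lambda>h. \<Sum>a\<in>A. frechet_derivative (f a) (at x) h)) (at x)"
    using assms by (intro has_derivative_sum) (auto simp: diff_has)
  then show ?thesis by (subst pd_has, assumption) (simp add: pd_def)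
qed

lemma pd_inverse:
  fixes d :: "real^'n::finite \<Rightarrow> real"
  assumes "d differentiable at x" "d x \<noteq> 0"
  shows "pd i (\<lambda>y. inverse (d y)) x = - (inverse (d x) * pd i d x * inverse (d x))"
  using Deriv.has_derivative_inverse[OF assms(2) diff_has[OF assms(1)]]
  by (subst pd_has, assumption) (simp add: pd_def)

fun Ck :: "nat \<Rightarrow> (real^'n::finite) set \<Rightarrow> (real^'n \<Rightarrow> 'b::real_normed_vector) \<Rightarrow> bool" where
  "Ck 0 U f = (\<forall>x\<in>U. f differentiable (at x))"
| "Ck (Suc k) U f = ((\<forall>x\<in>U. f differentiable (at x)) \<and> (\<forall>i. Ck k U (pd i f)))"

lemma diff_cong:
  assumes "open U" "x \<in> U" "\<And>y. y \<in> U \<Longrightarrow> f y = g y" "f differentiable at x"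
  shows "g differentiable at x"
  using assms unfolding differentiable_def by (meson has_derivative_transform_within_open)

lemma Ck_diff: "Ck k U f \<Longrightarrow> x \<in> U \<Longrightarrow> f differentiable (at x)"
  by (cases k) auto

lemma Ck_mono: "Ck (Suc k) U f \<Longrightarrow> Ck k U f"
  by (induction k arbitrary: f) auto

lemma Ck_cong:
  assumes "open U" "\<And>y. y \<in> U \<Longrightarrow> f y = g y" "Ck k U f"
  shows "Ck k U g"
  using assms(2,3)
proof (induction k arbitrary: f g)
  case 0
  then show ?case using assms(1)
    by (auto intro: diff_cong)
next
  case (Suc k)
  have d: "\<forall>x\<in>U. g differentiable (at x)"
    using Suc.prems assms(1) by (auto intro: diff_cong)
  have "Ck k U (pd i g)" for i
    using Suc.IH[of "pd i f" "pd i g"] Suc.prems pd_cong[OF assms(1), of _ f g] by auto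
  then show ?case using d by simp
qed

lemma Ck_const:
  fixes U :: "(real^'n::finite) set" and c :: "'b::real_normed_vector"
  shows "Ck k U (\<lambda>y. c)"
proof (induction k arbitrary: c)
  case (Suc k)
  have "pd (i::'n) (\<lambda>y. c) = (\<lambda>y. 0)" for i by (rule ext) (rule pd_const)
  then show ?case using Suc by simp
qed simp

lemma Ck_add:
  assumes "open U" shows "Ck k U f \<Longrightarrow> Ck k U g \<Longrightarrow> Ck k U (\<lambda>y. f y + g y)"
proof (induction k arbitrary: f g)
  case 0 then show ?case by auto
next
  case (Suc k)
  have "Ck k U (pd i (\<lambda>y. f y + g y))" for i
  proof (rule Ck_cong[OF assms, of "\<lambda>y. pd i f y + pd i g y"])
    show "pd i f y + pd i g y = pd i (\<lambda>y. f y + g y) y" if "y \<in> U" for y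
      using Suc.prems that by (intro pd_add[symmetric]) (auto intro: Ck_diff)
    show "Ck k U (\<lambda>y. pd i f y + pd i g y)"
      using Suc.prems by (intro Suc.IH) auto
  qed
  then show ?case using Suc.prems by auto
qed

lemma bilinear_differentiable:
  fixes bop :: "'a::real_normed_vector \<Rightarrow> 'b::real_normed_vector \<Rightarrow> 'c::real_normed_vector"
    and f :: "real^'n::finite \<Rightarrow> 'a" and g :: "real^'n \<Rightarrow> 'b"
  assumes "bounded_bilinear bop" "f differentiable at x" "g differentiable at x"
  shows "(\<lambda>y. bop (f y) (g y)) differentiable at x"
  using bounded_bilinear.FDERIV[OF assms(1) diff_has[OF assms(2)] diff_has[OF assms(3)]]
  unfolding differentiable_def by blast

lemma linear_differentiable:
  fixes L :: "'a::real_normed_vector \<Rightarrow> 'b::real_normed_vector" and f :: "real^'n::finite \<Rightarrow> 'a"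
  assumes "bounded_linear L" "f differentiable at x"
  shows "(\<lambda>y. L (f y)) differentiable at x"
  using has_derivative_compose[OF diff_has[OF assms(2)] bounded_linear.has_derivative[OF assms(1) has_derivative_ident]]
  unfolding differentiable_def o_def by blast

lemma Ck_bilinear:
  fixes bop :: "'a::real_normed_vector \<Rightarrow> 'b::real_normed_vector \<Rightarrow> 'c::real_normed_vector"
    and f :: "real^'n::finite \<Rightarrow> 'a" and g :: "real^'n \<Rightarrow> 'b"
  assumes "open U" "bounded_bilinear bop"
  shows "Ck k U f \<Longrightarrow> Ck k U g \<Longrightarrow> Ck k U (\<lambda>y. bop (f y) (g y))"
proof (induction k arbitrary: f g)
  case 0 then show ?case by (auto intro!: bilinear_differentiable[OF assms(2)])
next
  case (Suc k)
  have "Ck k U (pd i (\<lambda>y. bop (f y) (g y)))" for i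
  proof (rule Ck_cong[OF assms(1), of "\<lambda>y. bop (f y) (pd i g y) + bop (pd i f y) (g y)"])
    show "bop (f y) (pd i g y) + bop (pd i f y) (g y) = pd i (\<lambda>y. bop (f y) (g y)) y" if "y \<in> U" for y
      using Suc.prems that by (intro pd_bilinear[symmetric] assms) (auto intro: Ck_diff)
    show "Ck k U (\<lambda>y. bop (f y) (pd i g y) + bop (pd i f y) (g y))"
      using Suc.prems Ck_mono[of k U f] Ck_mono[of k U g] by (intro Ck_add assms Suc.IH) auto
  qed
  then show ?case using Suc.prems by (auto intro!: bilinear_differentiable[OF assms(2)])
qed

lemma Ck_linear:
  fixes L :: "'a::real_normed_vector \<Rightarrow> 'b::real_normed_vector" and f :: "real^'n::finite \<Rightarrow> 'a"
  assumes "open U" "bounded_linear L"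
  shows "Ck k U f \<Longrightarrow> Ck k U (\<lambda>y. L (f y))"
proof (induction k arbitrary: f)
  case 0 then show ?case using linear_differentiable[OF assms(2)] by auto
next
  case (Suc k)
  have "Ck k U (pd i (\<lambda>y. L (f y)))" for i
  proof (rule Ck_cong[OF assms(1), of "\<lambda>y. L (pd i f y)"])
    show "L (pd i f y) = pd i (\<lambda>y. L (f y)) y" if "y \<in> U" for y
      using Suc.prems that by (intro pd_linear[symmetric] assms) (auto intro: Ck_diff)
    show "Ck k U (\<lambda>y. L (pd i f y))"
      using Suc.prems by (intro Suc.IH) auto
  qed
  then show ?case using Suc.prems linear_differentiable[OF assms(2)] by auto
qed

lemma Ck_inverse:
  fixes d :: "real^'n::finite \<Rightarrow> real"
  assumes "open U" "\<And>y. y \<in> U \<Longrightarrow> d y \<noteq> 0"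
  shows "Ck k U d \<Longrightarrow> Ck k U (\<lambda>y. inverse (d y))"
proof (induction k)
  case 0 then show ?case using assms(2) by auto
next
  case (Suc k)
  have IH: "Ck k U (\<lambda>y. inverse (d y))" using Suc Ck_mono by blast
  have "Ck k U (pd i (\<lambda>y. inverse (d y)))" for i
  proof (rule Ck_cong[OF assms(1), of "\<lambda>y. - (inverse (d y) * pd i d y * inverse (d y))"])
    show "- (inverse (d y) * pd i d y * inverse (d y)) = pd i (\<lambda>y. inverse (d y)) y" if "y \<in> U" for y
      using Suc.prems that assms(2) by (intro pd_inverse[symmetric]) (auto intro: Ck_diff)
    show "Ck k U (\<lambda>y. - (inverse (d y) * pd i d y * inverse (d y)))"
      using Suc.prems IH
      by (intro Ck_linear[OF assms(1), where L=uminus] Ck_bilinear[OF assms(1) bounded_bilinear_mult]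
            bounded_linear_minus[OF bounded_linear_ident]) auto
  qed
  then show ?case using Suc.prems assms(2) by auto
qed

lemma Ck_sum:
  fixes f :: "'i \<Rightarrow> real^'n::finite \<Rightarrow> 'a::real_normed_vector"
  assumes "open U" "finite A"
  shows "(\<And>a. a \<in> A \<Longrightarrow> Ck k U (f a)) \<Longrightarrow> Ck k U (\<lambda>y. \<Sum>a\<in>A. f a y)"
  using assms(2)
proof (induction A rule: finite_induct)
  case empty then show ?case using Ck_const[of k U 0] by simp
next
  case (insert b F)
  then show ?case by (simp add: Ck_add[OF assms(1)])
qed

lemma Ck_prod:
  fixes f :: "'i \<Rightarrow> real^'n::finite \<Rightarrow> real"
  assumes "open U" "finite A"
  shows "(\<And>a. a \<in> A \<Longrightarrow> Ck k U (f a)) \<Longrightarrow> Ck k U (\<lambda>y. \<Prod>a\<in>A. f a y)"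
  using assms(2)
proof (induction A rule: finite_induct)
  case empty then show ?case using Ck_const[of k U 1] by simp
next
  case (insert b F)
  then show ?case by (simp add: Ck_bilinear[OF assms(1) bounded_bilinear_mult])
qed

definition sm :: "(real^'n::finite) set \<Rightarrow> (real^'n \<Rightarrow> 'b::real_normed_vector) \<Rightarrow> bool" where
  "sm U f \<longleftrightarrow> (\<forall>k. Ck k U f)"

lemma sm_diff': "sm U f \<Longrightarrow> x \<in> U \<Longrightarrow> f differentiable (at x)"
  unfolding sm_def using Ck_diff by blast

lemma sm_pd: "sm U f \<Longrightarrow> sm U (pd i f)"
  unfolding sm_def by (metis Ck.simps(2))

lemma sm_const: "sm U (\<lambda>y. c)"
  unfolding sm_def using Ck_const by blast

lemma sm_bilinear: "open U \<Longrightarrow> bounded_bilinear bop \<Longrightarrow> sm U f \<Longrightarrow> sm U g \<Longrightarrow> sm U (\<lambda>y. bop (f y) (g y))"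
  unfolding sm_def using Ck_bilinear by blast

lemma sm_linear: "open U \<Longrightarrow> bounded_linear L \<Longrightarrow> sm U f \<Longrightarrow> sm U (\<lambda>y. L (f y))"
  unfolding sm_def using Ck_linear by blast

lemma sm_add: "open U \<Longrightarrow> sm U f \<Longrightarrow> sm U g \<Longrightarrow> sm U (\<lambda>y. f y + g y)"
  unfolding sm_def using Ck_add by blast

lemma sm_minus: "open U \<Longrightarrow> sm U f \<Longrightarrow> sm U (\<lambda>y. - f y)"
  by (rule sm_linear[where L=uminus]) (auto intro: bounded_linear_minus[OF bounded_linear_ident])

lemma sm_diff: "open U \<Longrightarrow> sm U f \<Longrightarrow> sm U g \<Longrightarrow> sm U (\<lambda>y. f y - g y)"
  using sm_add[of U f "\<lambda>y. - g y"] sm_minus[of U g] by simp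

lemma sm_mult: "open U \<Longrightarrow> sm U f \<Longrightarrow> sm U g \<Longrightarrow> sm U (\<lambda>y. f y * g y :: real)"
  by (rule sm_bilinear[OF _ bounded_bilinear_mult])

lemma sm_scaleR: "open U \<Longrightarrow> sm U f \<Longrightarrow> sm U g \<Longrightarrow> sm U (\<lambda>y. f y *\<^sub>R g y)"
  by (rule sm_bilinear[OF _ bounded_bilinear_scaleR])

lemma sm_inner: "open U \<Longrightarrow> sm U f \<Longrightarrow> sm U g \<Longrightarrow> sm U (\<lambda>y. inner (f y) (g y) :: real)"
  by (rule sm_bilinear[OF _ bounded_bilinear_inner])

lemma sm_nth: "open U \<Longrightarrow> sm U f \<Longrightarrow> sm U (\<lambda>y. f y $ c)"
  by (rule sm_linear[OF _ bounded_linear_vec_nth])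

lemma sm_sum: "open U \<Longrightarrow> finite A \<Longrightarrow> (\<And>a. a \<in> A \<Longrightarrow> sm U (f a)) \<Longrightarrow> sm U (\<lambda>y. \<Sum>a\<in>A. f a y)"
  unfolding sm_def using Ck_sum by blast

lemma sm_prod: "open U \<Longrightarrow> finite A \<Longrightarrow> (\<And>a. a \<in> A \<Longrightarrow> sm U (f a)) \<Longrightarrow> sm U (\<lambda>y. \<Prod>a\<in>A. f a y :: real)"
  unfolding sm_def using Ck_prod by blast

lemma sm_inverse: "open U \<Longrightarrow> (\<And>y. y \<in> U \<Longrightarrow> d y \<noteq> 0) \<Longrightarrow> sm U d \<Longrightarrow> sm U (\<lambda>y. inverse (d y) :: real)"
  unfolding sm_def using Ck_inverse by blast

lemma sm_cong: "open U \<Longrightarrow> (\<And>y. y \<in> U \<Longrightarrow> f y = g y) \<Longrightarrow> sm U f \<Longrightarrow> sm U g"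
  unfolding sm_def using Ck_cong by blast

lemma ipd_snoc: "ipd (is @ [i]) f = ipd is (pd i f)"
  by (induction "is") auto

lemma smooth_Ck: "smooth_on U f \<Longrightarrow> Ck k U f"
proof (induction k arbitrary: f)
  case 0 then show ?case unfolding smooth_on_def by (metis ipd.simps(1) Ck.simps(1))
next
  case (Suc k)
  have "smooth_on U (pd i f)" for i
    using Suc.prems unfolding smooth_on_def by (metis ipd_snoc)
  then show ?case using Suc Suc.prems unfolding smooth_on_def by (metis ipd.simps(1) Ck.simps(2))
qed

lemma smooth_sm: "smooth_on U f \<Longrightarrow> sm U f"
  unfolding sm_def using smooth_Ck by blast




lemma sm_det:
  fixes M :: "real^'n::finite \<Rightarrow> real^'k::finite^'k"
  assumes "open U" "\<And>a b. sm U (\<lambda>y. M y $ a $ b)"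
  shows "sm U (\<lambda>y. det (M y))"
  unfolding det_def
  by (intro sm_sum sm_mult sm_prod sm_const assms finite_permutations) auto

lemma matrix_inv_right: "invertible A \<Longrightarrow> A ** matrix_inv A = mat 1"
  unfolding invertible_def matrix_inv_def by (rule someI_ex[where P="\<lambda>B. A ** B = mat 1 \<and> B ** A = mat 1", THEN conjunct1])

lemma matrix_inv_left: "invertible A \<Longrightarrow> matrix_inv A ** A = mat 1"
  unfolding invertible_def matrix_inv_def by (rule someI_ex[where P="\<lambda>B. A ** B = mat 1 \<and> B ** A = mat 1", THEN conjunct2])

lemma matrix_inv_cramer:
  fixes A :: "real^'n::finite^'n"
  assumes "det A \<noteq> 0"
  shows "matrix_inv A $ k $ j = det (\<chi> a l. if l = k then axis j 1 $ a else A $ a $ l) / det A"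
proof -
  have inv: "invertible A" using assms invertible_det_nz by blast
  have "A *v (matrix_inv A *v axis j 1) = axis j 1"
    by (simp add: matrix_vector_mul_assoc matrix_inv_right[OF inv])
  then have "matrix_inv A *v axis j 1 = (\<chi> k. det (\<chi> a l. if l = k then axis j 1 $ a else A $ a $ l) / det A)"
    using cramer[OF assms] by blast
  moreover have "(matrix_inv A *v axis j 1) $ k = matrix_inv A $ k $ j"
    by (simp add: matrix_vector_mult_def axis_def if_distrib[of "\<lambda>t. _ * t"] cong: if_cong)
  ultimately show ?thesis by simp
qed

lemma metric_nz:
  fixes X :: "real^'n::finite \<Rightarrow> real^'m::finite"
  assumes d: "X differentiable at x" and inj: "inj (frechet_derivative X (at x))"
  shows "det (metric X x) \<noteq> 0"
proof -
  let ?D = "frechet_derivative X (at x)"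
  have lin: "linear ?D" using linear_frechet_derivative[OF d] .
  have "\<forall>v. metric X x *v v = 0 \<longrightarrow> v = 0"
  proof (intro allI impI)
    fix v assume "metric X x *v v = 0"
    then have "v \<bullet> (metric X x *v v) = 0" by simp
    moreover have "v \<bullet> (metric X x *v v) = ?D v \<bullet> ?D v"
    proof -
      have Dv: "?D v = (\<Sum>i\<in>UNIV. v $ i *\<^sub>R pd i X x)"
      proof -
        have "v = (\<Sum>i\<in>UNIV. v $ i *\<^sub>R axis i 1)"
          by (simp add: vec_eq_iff axis_def sum_component if_distrib[of "\<lambda>t. _ * t"] cong: if_cong)
        then have "?D v = ?D (\<Sum>i\<in>UNIV. v $ i *\<^sub>R axis i 1)" by simp
        also have "\<dots> = (\<Sum>i\<in>UNIV. v $ i *\<^sub>R ?D (axis i 1))"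
          using lin by (simp add: linear_sum linear_scale)
        finally show ?thesis by (simp add: pd_def)
      qed
      have "v \<bullet> (metric X x *v v) = (\<Sum>i\<in>UNIV. \<Sum>j\<in>UNIV. v $ i * v $ j * (pd i X x \<bullet> pd j X x))"
        unfolding inner_vec_def[of v] 
        apply (simp add: matrix_vector_mult_def metric_def sum_distrib_left)
        apply (intro sum.cong refl)
        apply (simp add: mult.assoc)
        done
      moreover have "?D v \<bullet> ?D v = (\<Sum>i\<in>UNIV. \<Sum>j\<in>UNIV. v $ i * v $ j * (pd i X x \<bullet> pd j X x))"
        unfolding Dv
        apply (simp add: inner_sum_left inner_sum_right sum_distrib_left mult.assoc)
        apply (intro sum.cong refl)
        apply (simp add: inner_commute)
        done
      ultimately show ?thesis by simp
    qed
    ultimately have "?D v = 0" by simp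
    then show "v = 0" using inj lin by (metis linear_0 injD)
  qed
  then have "invertible (metric X x)"
    using invertible_left_inverse matrix_left_invertible_ker by blast
  then show ?thesis using invertible_det_nz by blast
qed

context
  fixes U :: "(real^'n::finite) set" and X :: "real^'n \<Rightarrow> real^'m::finite"
  assumes U: "open U" and sX: "sm U X" and imm: "\<forall>x\<in>U. inj (frechet_derivative X (at x))"
begin

lemma dX: "x \<in> U \<Longrightarrow> X differentiable at x"
  using sm_diff'[OF sX] .

lemma det_nz: "x \<in> U \<Longrightarrow> det (metric X x) \<noteq> 0"
  using metric_nz dX imm by blast

lemma sm_metric: "sm U (\<lambda>y. metric X y $ i $ j)"
  unfolding metric_def by (simp add: sm_inner U sm_pd sX)

lemma sm_ginv: "sm U (\<lambda>y. ginv X y $ k $ j)"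
proof (rule sm_cong[OF U])
  show "det (\<chi> a l. if l = k then axis j 1 $ a else metric X y $ a $ l) * inverse (det (metric X y)) = ginv X y $ k $ j"
    if "y \<in> U" for y
    using matrix_inv_cramer[OF det_nz[OF that], of k j] by (simp add: ginv_def divide_inverse)
  have e: "sm U (\<lambda>y. (\<chi> a l. if l = k then axis j 1 $ a else metric X y $ a $ l) $ a $ b)" for a b
    by (cases "b = k") (simp_all add: sm_const sm_metric)
  show "sm U (\<lambda>y. det (\<chi> a l. if l = k then axis j 1 $ a else metric X y $ a $ l) * inverse (det (metric X y)))"
    by (intro sm_mult U sm_inverse sm_det e sm_metric det_nz)
qed

lemma sm_christ: "sm U (christ X k i j)"
proof -
  have "sm U (\<lambda>x. (1/2) * (\<Sum>l\<in>UNIV. ginv X x $ k $ l *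
      (pd i (\<lambda>y. metric X y $ j $ l) x + pd j (\<lambda>y. metric X y $ i $ l) x
       - pd l (\<lambda>y. metric X y $ i $ j) x)))"
    apply (rule sm_mult[OF U sm_const])
    apply (rule sm_sum[OF U finite_class.finite_UNIV])
    apply (rule sm_mult[OF U sm_ginv])
    apply (rule sm_diff[OF U sm_add[OF U]])
    apply (rule sm_pd[OF sm_metric])+
    done
  then show ?thesis unfolding christ_def[abs_def] .
qed

lemma sm_pdX: "sm U (pd i X)" "sm U (pd i (pd j X))"
  by (rule sm_pd sX)+

lemma sm_tension: "sm U (tension X)"
proof -
  have "sm U (\<lambda>x. \<Sum>i\<in>UNIV. \<Sum>j\<in>UNIV. ginv X x $ i $ j *\<^sub>R
     ((pd i (pd j X) x - (pd i (pd j X) x \<bullet> X x) *\<^sub>R X x) - (\<Sum>k\<in>UNIV. christ X k i j x *\<^sub>R pd k X x)))"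
    apply (rule sm_sum[OF U finite_class.finite_UNIV])+
    apply (rule sm_scaleR[OF U sm_ginv])
    apply (rule sm_diff[OF U sm_diff[OF U sm_pdX(2) sm_scaleR[OF U sm_inner[OF U sm_pdX(2) sX] sX]]])
    apply (rule sm_sum[OF U finite_class.finite_UNIV])
    apply (rule sm_scaleR[OF U sm_christ sm_pdX(1)])
    done
  then show ?thesis unfolding tension_def[abs_def] hess_map_def pull_conn_def sph_proj_def .
qed

end




definition VL :: "(real^'n::finite \<Rightarrow> real^'m::finite) \<Rightarrow> (real^'n \<Rightarrow> real^'k::finite) \<Rightarrow> real^'n \<Rightarrow> real^'k" where
  "VL X F y = (\<Sum>i\<in>UNIV. \<Sum>j\<in>UNIV. ginv X y $ i $ j *\<^sub>R
      (pd i (pd j F) y - (\<Sum>k\<in>UNIV. christ X k i j y *\<^sub>R pd k F y)))"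

context
  fixes U :: "(real^'n::finite) set" and X :: "real^'n \<Rightarrow> real^'m::finite"
  assumes U: "open U" and sX: "sm U X" and imm: "\<forall>x\<in>U. inj (frechet_derivative X (at x))"
    and sph: "\<forall>x\<in>U. X x \<bullet> X x = 1"
begin

lemma pd_nth:
  fixes F :: "real^'n \<Rightarrow> real^'k::finite"
  assumes "sm U F" "y \<in> U" shows "pd i (\<lambda>z. F z $ c) y = pd i F y $ c"
  using pd_linear[OF bounded_linear_vec_nth sm_diff'[OF assms]] .

lemma lap_nth:
  fixes F :: "real^'n \<Rightarrow> real^'k::finite"
  assumes F: "sm U F" and y: "y \<in> U"
  shows "lap X (\<lambda>z. F z $ c) y = VL X F y $ c"
proof -
  have "pd i (pd j (\<lambda>z. F z $ c)) y = pd i (\<lambda>z. pd j F z $ c) y" for i j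
    using pd_nth[OF F] by (intro pd_cong[OF U y]) auto
  also have "\<dots> i j = pd i (pd j F) y $ c" for i j
    using pd_nth[OF sm_pd[OF F] y] .
  finally show ?thesis
    unfolding lap_def VL_def using pd_nth[OF F y] by simp
qed

lemma lap_cong:
  assumes y: "y \<in> U" and fg: "\<And>z. z \<in> U \<Longrightarrow> f z = g z"
  shows "lap X f y = lap X g y"
proof -
  have a: "pd k f y = pd k g y" for k using pd_cong[OF U y fg] .
  have "pd i (pd j f) y = pd i (pd j g) y" for i j
    by (rule pd_cong[OF U y]) (rule pd_cong[OF U _ fg])
  then show ?thesis unfolding lap_def a by simp
qed

lemma VL_lin:
  fixes F G :: "real^'n \<Rightarrow> real^'k::finite"
  assumes F: "sm U F" and G: "sm U G" and y: "y \<in> U"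
  shows "VL X (\<lambda>z. F z - a *\<^sub>R G z) y = VL X F y - a *\<^sub>R VL X G y"
proof -
  have d1: "pd k (\<lambda>z. F z - a *\<^sub>R G z) z = pd k F z - a *\<^sub>R pd k G z" if "z \<in> U" for k z
    using pd_diff[OF sm_diff'[OF F that] linear_differentiable[OF bounded_linear_scaleR_right sm_diff'[OF G that]]]
      pd_linear[OF bounded_linear_scaleR_right sm_diff'[OF G that]] by simp
  have "pd i (pd j (\<lambda>z. F z - a *\<^sub>R G z)) y = pd i (\<lambda>z. pd j F z - a *\<^sub>R pd j G z) y" for i j
    using d1 by (intro pd_cong[OF U y]) auto
  also have "\<dots> i j = pd i (pd j F) y - a *\<^sub>R pd i (pd j G) y" for i j
    using pd_diff[OF sm_diff'[OF sm_pd[OF F] y] linear_differentiable[OF bounded_linear_scaleR_right sm_diff'[OF sm_pd[OF G] y]]]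
      pd_linear[OF bounded_linear_scaleR_right sm_diff'[OF sm_pd[OF G] y]] by simp
  finally have d2: "pd i (pd j (\<lambda>z. F z - a *\<^sub>R G z)) y = pd i (pd j F) y - a *\<^sub>R pd i (pd j G) y" for i j .
  have s: "ginv X y $ i $ j *\<^sub>R (pd i (pd j F) y - a *\<^sub>R pd i (pd j G) y
      - (\<Sum>k\<in>UNIV. christ X k i j y *\<^sub>R (pd k F y - a *\<^sub>R pd k G y)))
    = ginv X y $ i $ j *\<^sub>R (pd i (pd j F) y - (\<Sum>k\<in>UNIV. christ X k i j y *\<^sub>R pd k F y))
      - a *\<^sub>R (ginv X y $ i $ j *\<^sub>R (pd i (pd j G) y - (\<Sum>k\<in>UNIV. christ X k i j y *\<^sub>R pd k G y)))" for i j
  proof -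
    have "(\<Sum>k\<in>UNIV. christ X k i j y *\<^sub>R (pd k F y - a *\<^sub>R pd k G y))
        = (\<Sum>k\<in>UNIV. christ X k i j y *\<^sub>R pd k F y) - a *\<^sub>R (\<Sum>k\<in>UNIV. christ X k i j y *\<^sub>R pd k G y)"
      by (simp add: scaleR_diff_right sum_subtractf scaleR_sum_right mult.commute)
    then show ?thesis by (simp add: scaleR_diff_right mult.commute)
  qed
  show ?thesis
    unfolding VL_def d2 d1[OF y] s
    by (simp add: sum_subtractf scaleR_sum_right)
qed

lemma XXj: assumes y: "y \<in> U" shows "X y \<bullet> pd j X y = 0"
proof -
  have "pd j (\<lambda>z. X z \<bullet> X z) y = pd j (\<lambda>z. 1::real) y"
    using sph by (intro pd_cong[OF U y]) auto
  then have "X y \<bullet> pd j X y + pd j X y \<bullet> X y = 0"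
    using pd_bilinear[OF bounded_bilinear_inner sm_diff'[OF sX y] sm_diff'[OF sX y]] pd_const by simp
  then show ?thesis by (simp add: inner_commute)
qed

lemma XXij: assumes y: "y \<in> U" shows "X y \<bullet> pd i (pd j X) y = - (pd i X y \<bullet> pd j X y)"
proof -
  have "pd i (\<lambda>z. X z \<bullet> pd j X z) y = pd i (\<lambda>z. 0::real) y"
    using XXj by (intro pd_cong[OF U y]) auto
  then have "X y \<bullet> pd i (pd j X) y + pd i X y \<bullet> pd j X y = 0"
    using pd_bilinear[OF bounded_bilinear_inner sm_diff'[OF sX y] sm_diff'[OF sm_pd[OF sX] y]] pd_const by simp
  then show ?thesis by simp
qed

lemma tension_X: assumes y: "y \<in> U" shows "tension X y \<bullet> X y = 0"
  using XXj[OF y] sph y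
  by (simp add: tension_def hess_map_def pull_conn_def sph_proj_def inner_sum_left inner_diff_left
      inner_sum_right inner_diff_right inner_commute)

lemma trace_g: assumes y: "y \<in> U"
  shows "(\<Sum>i\<in>UNIV. \<Sum>j\<in>UNIV. ginv X y $ i $ j * (pd i X y \<bullet> pd j X y)) = real CARD('n)"
proof -
  have inv: "invertible (metric X y)" using det_nz[OF U sX imm y] invertible_det_nz by blast
  have "(ginv X y ** metric X y) $ i $ i = 1" for i
    using matrix_inv_left[OF inv] by (simp add: ginv_def mat_def)
  then have "(\<Sum>j\<in>UNIV. ginv X y $ i $ j * (pd j X y \<bullet> pd i X y)) = 1" for i
    by (simp add: matrix_matrix_mult_def metric_def)
  moreover have "(\<Sum>j\<in>UNIV. ginv X y $ i $ j * (pd j X y \<bullet> pd i X y)) = (\<Sum>j\<in>UNIV. ginv X y $ i $ j * (pd i X y \<bullet> pd j X y))" for i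
    by (intro sum.cong refl) (simp add: inner_commute)
  ultimately have "(\<Sum>j\<in>UNIV. ginv X y $ i $ j * (pd i X y \<bullet> pd j X y)) = 1" for i
    by metis
  then show ?thesis by simp
qed

lemma tension_VL: assumes y: "y \<in> U" shows "tension X y = VL X X y + real CARD('n) *\<^sub>R X y"
proof -
  have "tension X y - VL X X y = (\<Sum>i\<in>UNIV. \<Sum>j\<in>UNIV. ginv X y $ i $ j *\<^sub>R (- (pd i (pd j X) y \<bullet> X y) *\<^sub>R X y))"
    unfolding tension_def VL_def hess_map_def pull_conn_def sph_proj_def
    by (simp add: sum_subtractf[symmetric] scaleR_diff_right algebra_simps)
  also have "\<dots> = (\<Sum>i\<in>UNIV. \<Sum>j\<in>UNIV. ginv X y $ i $ j * (pd i X y \<bullet> pd j X y)) *\<^sub>R X y"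
    using XXij[OF y] by (simp add: scaleR_sum_left inner_commute)
  finally show ?thesis using trace_g[OF y] by (simp add: algebra_simps)
qed

end




lemma linear_sph_proj: "linear (sph_proj p)"
  by (rule linearI) (simp_all add: sph_proj_def inner_add_left algebra_simps)

lemma cancel_aux: "(a::'a::ab_group_add) + s + (c - s) = a + c"
  by (simp add: algebra_simps)

lemma aux3: "(g::real) *\<^sub>R (a + b - c) = g *\<^sub>R (a - c) + g *\<^sub>R (b::'a::real_vector)"
  by (simp add: algebra_simps)

lemma sph_proj_aux1:
  fixes p v w :: "real^'m::finite"
  assumes "p \<bullet> p = 1" "w \<bullet> p = 0"
  shows "sph_proj p (v - ((- a) *\<^sub>R w + b *\<^sub>R p)) = sph_proj p v + a *\<^sub>R w"
  using assms by (simp add: sph_proj_def inner_diff_left inner_add_left algebra_simps)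

lemma sph_proj_aux2:
  fixes p t :: "real^'m::finite"
  assumes "p \<bullet> p = 1" "t \<bullet> p = 0"
  shows "sph_proj p (n *\<^sub>R (t - n *\<^sub>R p) + f *\<^sub>R p) = n *\<^sub>R t"
  using assms by (simp add: sph_proj_def inner_diff_left inner_add_left algebra_simps)

context
  fixes U :: "(real^'n::finite) set" and X :: "real^'n \<Rightarrow> real^'m::finite"
  assumes U: "open U" and sX: "sm U X" and imm: "\<forall>x\<in>U. inj (frechet_derivative X (at x))"
    and sph: "\<forall>x\<in>U. X x \<bullet> X x = 1"
begin

lemma sT: "sm U (tension X)" using sm_tension[OF U sX imm] .

lemma XjX: "y \<in> U \<Longrightarrow> pd j X y \<bullet> X y = 0"
  using XXj[OF U sX imm sph] by (simp add: inner_commute)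

lemma pull2: assumes y: "y \<in> U"
  shows "pull_conn X i (pull_conn X j (tension X)) y
       = sph_proj (X y) (pd i (pd j (tension X)) y) + (tension X y \<bullet> pd j X y) *\<^sub>R pd i X y"
proof -
  let ?T = "tension X"
  have e: "pull_conn X j ?T = (\<lambda>z. pd j ?T z - (pd j ?T z \<bullet> X z) *\<^sub>R X z)"
    by (rule ext) (simp add: pull_conn_def sph_proj_def)
  have dW: "pd j ?T differentiable at y" using sm_diff'[OF sm_pd[OF sT] y] .
  have dX: "X differentiable at y" using sm_diff'[OF sX y] .
  have da: "(\<lambda>z. pd j ?T z \<bullet> X z) differentiable at y"
    by (rule bilinear_differentiable[OF bounded_bilinear_inner dW dX])
  have f1: "pd i (\<lambda>z. pd j ?T z - (pd j ?T z \<bullet> X z) *\<^sub>R X z) y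
     = pd i (pd j ?T) y - ((pd j ?T y \<bullet> X y) *\<^sub>R pd i X y + pd i (\<lambda>z. pd j ?T z \<bullet> X z) y *\<^sub>R X y)"
    using pd_diff[OF dW bilinear_differentiable[OF bounded_bilinear_scaleR da dX]]
      pd_bilinear[OF bounded_bilinear_scaleR da dX] by simp
  have f2: "pd j ?T y \<bullet> X y = - (?T y \<bullet> pd j X y)"
  proof -
    have "pd j (\<lambda>z. ?T z \<bullet> X z) y = pd j (\<lambda>z. 0::real) y"
      using tension_X[OF U sX imm sph] by (intro pd_cong[OF U y]) auto
    then have "?T y \<bullet> pd j X y + pd j ?T y \<bullet> X y = 0"
      using pd_bilinear[OF bounded_bilinear_inner sm_diff'[OF sT y] dX] pd_const by simp
    then show ?thesis by simp
  qed
  have "pull_conn X i (pull_conn X j ?T) y = sph_proj (X y) (pd i (\<lambda>z. pd j ?T z - (pd j ?T z \<bullet> X z) *\<^sub>R X z) y)"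
    by (simp only: e pull_conn_def)
  also have "\<dots> = sph_proj (X y) (pd i (pd j ?T) y - ((pd j ?T y \<bullet> X y) *\<^sub>R pd i X y + pd i (\<lambda>z. pd j ?T z \<bullet> X z) y *\<^sub>R X y))"
    by (simp only: f1)
  also have "\<dots> = sph_proj (X y) (pd i (pd j ?T) y) + (?T y \<bullet> pd j X y) *\<^sub>R pd i X y"
    unfolding f2 using sph y XjX[OF y] by (intro sph_proj_aux1) auto
  finally show ?thesis .
qed

lemma bitension_eq: assumes y: "y \<in> U"
  shows "bitension X y = sph_proj (X y) (VL X (tension X) y) + real CARD('n) *\<^sub>R tension X y"
proof -
  let ?T = "tension X" and ?P = "sph_proj (X y)"
  have lin: "linear ?P" by (rule linear_sph_proj)
  have PV: "?P (VL X ?T y) = (\<Sum>i\<in>UNIV. \<Sum>j\<in>UNIV. ginv X y $ i $ j *\<^sub>R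
      (?P (pd i (pd j ?T) y) - (\<Sum>k\<in>UNIV. christ X k i j y *\<^sub>R ?P (pd k ?T y))))"
    unfolding VL_def by (simp add: linear_sum[OF lin] linear_scale[OF lin] linear_diff[OF lin])
  have RL: "rough_lap X ?T y = ?P (VL X ?T y) + (\<Sum>i\<in>UNIV. \<Sum>j\<in>UNIV. ginv X y $ i $ j *\<^sub>R
      ((?T y \<bullet> pd j X y) *\<^sub>R pd i X y))"
  proof -
    have "rough_lap X ?T y = (\<Sum>i\<in>UNIV. \<Sum>j\<in>UNIV. ginv X y $ i $ j *\<^sub>R
      (?P (pd i (pd j ?T) y) - (\<Sum>k\<in>UNIV. christ X k i j y *\<^sub>R ?P (pd k ?T y)))
      + ginv X y $ i $ j *\<^sub>R ((?T y \<bullet> pd j X y) *\<^sub>R pd i X y))"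
      unfolding rough_lap_def pull2[OF y] pull_conn_def[of X _ "tension X" y]
      by (rule sum.cong[OF refl], rule sum.cong[OF refl], rule aux3)
    then show ?thesis unfolding PV by (simp add: sum.distrib)
  qed
  have CT: "(\<Sum>i\<in>UNIV. \<Sum>j\<in>UNIV. ginv X y $ i $ j *\<^sub>R sphere_R (?T y) (pd i X y) (pd j X y))
     = (\<Sum>i\<in>UNIV. \<Sum>j\<in>UNIV. ginv X y $ i $ j * (pd i X y \<bullet> pd j X y)) *\<^sub>R ?T y
       - (\<Sum>i\<in>UNIV. \<Sum>j\<in>UNIV. ginv X y $ i $ j *\<^sub>R ((?T y \<bullet> pd j X y) *\<^sub>R pd i X y))"
    by (simp add: sphere_R_def scaleR_diff_right sum_subtractf scaleR_sum_left)
  show ?thesis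
  proof -
    have "bitension X y = rough_lap X ?T y + (\<Sum>i\<in>UNIV. \<Sum>j\<in>UNIV. ginv X y $ i $ j *\<^sub>R sphere_R (?T y) (pd i X y) (pd j X y))"
      by (simp only: bitension_def)
    also have "\<dots> = ?P (VL X ?T y) + real CARD('n) *\<^sub>R ?T y"
      unfolding RL CT trace_g[OF U sX imm sph y] by (rule cancel_aux)
    finally show ?thesis .
  qed
qed

lemma main_tension:
  assumes bih: "biharmonic_on U X"
    and phi: "\<forall>x\<in>U. \<forall>i. lap X (lap X (\<lambda>y. X y $ i)) x = \<phi> x * X x $ i"
    and x: "x \<in> U"
  shows "tension X x = 0"
proof -
  let ?T = "tension X" and ?n = "real CARD('n)"
  have sF: "sm U (\<lambda>z. ?T z - ?n *\<^sub>R X z)"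
    by (rule sm_diff[OF U sT sm_scaleR[OF U sm_const sX]])
  have VXz: "VL X X z = ?T z - ?n *\<^sub>R X z" if "z \<in> U" for z
  proof -
    have "?T z = VL X X z + ?n *\<^sub>R X z" by (rule tension_VL[OF U sX imm sph that])
    then show ?thesis by (simp add: algebra_simps)
  qed
  have comp: "(VL X ?T x - ?n *\<^sub>R VL X X x) $ c = (\<phi> x *\<^sub>R X x) $ c" for c
  proof -
    have "lap X (\<lambda>y. X y $ c) z = (?T z - ?n *\<^sub>R X z) $ c" if "z \<in> U" for z
      using lap_nth[OF U sX imm sph sX that, of c] VXz[OF that] by (simp only:)
    then have "lap X (lap X (\<lambda>y. X y $ c)) x = lap X (\<lambda>z. (?T z - ?n *\<^sub>R X z) $ c) x"
      by (rule lap_cong[OF U sX imm sph x])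
    also have "\<dots> = VL X (\<lambda>z. ?T z - ?n *\<^sub>R X z) x $ c"
      by (rule lap_nth[OF U sX imm sph sF x])
    also have "\<dots> = (VL X ?T x - ?n *\<^sub>R VL X X x) $ c"
      by (simp only: VL_lin[OF U sX imm sph sT sX x])
    finally have "(VL X ?T x - ?n *\<^sub>R VL X X x) $ c = lap X (lap X (\<lambda>y. X y $ c)) x" by (rule sym)
    also have "\<dots> = \<phi> x * X x $ c" using phi x by blast
    also have "\<dots> = (\<phi> x *\<^sub>R X x) $ c" by simp
    finally show ?thesis .
  qed
  have h: "VL X ?T x = ?n *\<^sub>R (?T x - ?n *\<^sub>R X x) + \<phi> x *\<^sub>R X x"
  proof -
    have "VL X ?T x - ?n *\<^sub>R VL X X x = \<phi> x *\<^sub>R X x"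
      using comp by (simp only: vec_eq_iff) blast
    then show ?thesis unfolding VXz[OF x] by (simp add: algebra_simps)
  qed
  have TX: "?T x \<bullet> X x = 0" using tension_X[OF U sX imm sph x] .
  have XX: "X x \<bullet> X x = 1" using sph x by blast
  have P: "sph_proj (X x) (VL X ?T x) = ?n *\<^sub>R ?T x"
    unfolding h by (rule sph_proj_aux2[OF XX TX])
  have "bitension X x = ?n *\<^sub>R ?T x + ?n *\<^sub>R ?T x"
    using bitension_eq[OF x] unfolding P .
  also have "\<dots> = (2 * ?n) *\<^sub>R ?T x" by (metis mult_2 scaleR_add_left)
  finally have "(2 * ?n) *\<^sub>R ?T x = 0" using bih x unfolding biharmonic_on_def by metis
  moreover have "2 * ?n \<noteq> 0" by (simp add: card_gt_0_iff)
  ultimately show ?thesis by simp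
qed

end


theorem corollary4p2:
  fixes U :: "(real^'n::finite) set" and X :: "real^'n \<Rightarrow> real^'m::finite"
  assumes dim: "CARD('m) = CARD('n) + 2"
    and U: "open U"
    and smooth: "smooth_on U X"
    and imm: "immersion_on U X"
    and sphere: "\<forall>x\<in>U. norm (X x) = 1"
    and bih: "biharmonic_on U X"
    and phi: "\<exists>\<phi> :: real^'n \<Rightarrow> real. \<forall>x\<in>U. \<forall>i.
                 lap X (lap X (\<lambda>y. X y $ i)) x = \<phi> x * X x $ i"
  shows "\<forall>x\<in>U. mean_curv X x = 0"
proof
  fix x assume x: "x \<in> U"
  have sX: "sm U X" using smooth_sm[OF smooth] .
  have imm': "\<forall>x\<in>U. inj (frechet_derivative X (at x))" using imm unfolding immersion_on_def .
  have sph: "\<forall>x\<in>U. X x \<bullet> X x = 1" using sphere by (simp add: norm_eq_1)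
  obtain \<phi> :: "real^'n \<Rightarrow> real" where
    p: "\<forall>x\<in>U. \<forall>i. lap X (lap X (\<lambda>y. X y $ i)) x = \<phi> x * X x $ i"
    using phi by blast
  have "tension X x = 0" by (rule main_tension[OF U sX imm' sph bih p x])
  then show "mean_curv X x = 0" by (simp add: mean_curv_def)
qed

end
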